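(* Let $\alpha_1,\dots,\alpha_n$ be real numbers and $\pi\in S_n$ a permutation with $\alpha_{\pi(1)}>\alpha_{\pi(2)}>\dots>\alpha_{\pi(n)}$. Let $w=s_{\ell_1}\cdots s_{\ell_k}$ be a reduced word for a glide in $\hat S_n$, and in the wiring diagram of $|w$ number the wires so that wire $i$ starts in position $i$; give each crossing the parameter $\alpha_{\mathrm{up}}-\alpha_{\mathrm{low}}$, where $\mathrm{up},\mathrm{low}$ are the numbers of its upper and lower wires. Then all crossing parameters are positive if and only if $t(w)\in\pi(\mathfrak C_{id})$, i.e. if and only if a (equivalently any) representative $(t_1,\dots,t_n)\in\mathbb Z^n$ of $t(w)$ satisfies $t_{\pi(1)}\ge t_{\pi(2)}\ge\dots\ge t_{\pi(n)}$.
   Context: $\hat S_n$: generators $s_0,\dots,s_{n-1}$ (indices mod $n$), relations $s_i^2=1$, $s_is_js_i=s_js_is_j$ if $i-j\equiv\pm1$, $s_is_j=s_js_i$ if $i-j\not\equiv0,\pm1\pmod n$. $\phi:\hat S_n\to S_n$, $s_i\mapsto(i\ i+1)$ for $1\le i\le n-1$, $s_0\mapsto(1\ n)$; a glide of offset $k\in\{0,\dots,n-1\}$ is $g$ with $\phi(g)(j)\equiv j+k\pmod n$. Wiring diagram: the word is drawn left to right on a cylinder with wires in positions $1,\dots,n$ (mod $n$); $s_i$ is a crossing of positions $i,i+1$ ($s_0$: positions $n$ and $1$); the upper wire of $s_i$ passes from position $i+1$ to $i$ (for $s_0$: from position $1$ to $n$). Universal cover: positions are integers, $s_i$ lifting to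 crossings of $p,p+1$ for all $p\equiv i\pmod n$, lifted wires labelled by their starting integer positions. A chamber's label is $(\mathbf s_1,\dots,\mathbf s_n)$, $\mathbf s_i=\lceil\max\{b\in S: b\equiv i\bmod n\}/n\rceil$ where $S$ is the set of labels of wires passing below it. The trajectory $t(w)\in\mathbb Z^n/\mathbb Z(1,\dots,1)$ is the label of the chamber directly above the wire labelled $1$ at the right end of the diagram minus the label of the chamber directly above wire $1$ at the left end. The dominant chamber is $\mathfrak C_{id}=\{x: x_1\ge x_2\ge\dots\ge x_n\}$. *)

theory Defs
  imports Complex_Main "HOL-Combinatorics.Transposition" "HOL-Combinatorics.Permutations"
begin

text \<open>Words in the generators s_0,...,s_{n-1} of the affine symmetric group are lists of
  indices in {0..n-1}.\<close>

definition word :: "nat \<Rightarrow> nat list \<Rightarrow> bool" where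
  "word n w \<longleftrightarrow> (\<forall>l\<in>set w. l < n)"

inductive hat_step :: "nat \<Rightarrow> nat list \<Rightarrow> nat list \<Rightarrow> bool" for n where
  square: "hat_step n (a @ [i, i] @ b) (a @ b)"
| braid: "(int i - int j) mod int n \<in> {1, int n - 1} \<Longrightarrow>
          hat_step n (a @ [i, j, i] @ b) (a @ [j, i, j] @ b)"
| comm: "(int i - int j) mod int n \<notin> {0, 1, int n - 1} \<Longrightarrow>
          hat_step n (a @ [i, j] @ b) (a @ [j, i] @ b)"

definition hat_eq :: "nat \<Rightarrow> nat list \<Rightarrow> nat list \<Rightarrow> bool" where
  "hat_eq n = (sup (hat_step n) (hat_step n)\<inverse>\<inverse>)\<^sup>*\<^sup>*"

definition reduced_word :: "nat \<Rightarrow> nat list \<Rightarrow> bool" where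
  "reduced_word n w \<longleftrightarrow> word n w \<and>
     (\<forall>w'. word n w' \<and> hat_eq n w w' \<longrightarrow> length w \<le> length w')"

text \<open>The homomorphism phi to S_n (permutations of {1..n}); a word maps to the composite
  phi(s_{l_1}) o ... o phi(s_{l_k}).\<close>
definition phi_gen :: "nat \<Rightarrow> nat \<Rightarrow> nat \<Rightarrow> nat" where
  "phi_gen n i = (if i = 0 then transpose 1 n else transpose i (Suc i))"

definition phi_word :: "nat \<Rightarrow> nat list \<Rightarrow> nat \<Rightarrow> nat" where
  "phi_word n w = foldr (\<lambda>i f. phi_gen n i \<circ> f) w id"

definition is_glide :: "nat \<Rightarrow> nat list \<Rightarrow> bool" where
  "is_glide n w \<longleftrightarrow> (\<exists>k<n. \<forall>j\<in>{1..n}. phi_word n w j mod n = (j + k) mod n)"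

text \<open>Wiring diagram on the universal cover: a state is a map from integer positions to the
  label (integer starting position) of the lifted wire currently there.\<close>
definition cross :: "nat \<Rightarrow> nat \<Rightarrow> (int \<Rightarrow> int) \<Rightarrow> int \<Rightarrow> int" where
  "cross n i W = (\<lambda>p. if p mod int n = int i mod int n then W (p + 1)
                     else if (p - 1) mod int n = int i mod int n then W (p - 1)
                     else W p)"

definition wires_after :: "nat \<Rightarrow> nat list \<Rightarrow> int \<Rightarrow> int" where
  "wires_after n ws = foldl (\<lambda>W i. cross n i W) id ws"

text \<open>Number (in 1..n) of the wire on the cylinder corresponding to the lifted wire b.\<close>
definition cyl_wire :: "nat \<Rightarrow> int \<Rightarrow> nat" where
  "cyl_wire n b = nat ((b - 1) mod int n) + 1"

text \<open>The crossing of s_i (on the cylinder) is between positions p and p+1 with p = i,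
  resp. p = n for s_0; the upper wire passes from position p+1 to p.\<close>
definition cross_pos :: "nat \<Rightarrow> nat \<Rightarrow> int" where
  "cross_pos n i = (if i = 0 then int n else int i)"

definition upper_wire :: "nat \<Rightarrow> nat list \<Rightarrow> nat \<Rightarrow> nat" where
  "upper_wire n w t = cyl_wire n (wires_after n (take t w) (cross_pos n (w ! t) + 1))"

definition lower_wire :: "nat \<Rightarrow> nat list \<Rightarrow> nat \<Rightarrow> nat" where
  "lower_wire n w t = cyl_wire n (wires_after n (take t w) (cross_pos n (w ! t)))"

text \<open>Parameter alpha_up - alpha_low of the t-th crossing (t counted from 0).\<close>
definition crossing_param :: "nat \<Rightarrow> (nat \<Rightarrow> real) \<Rightarrow> nat list \<Rightarrow> nat \<Rightarrow> real" where
  "crossing_param n \<alpha> w t = \<alpha> (upper_wire n w t) - \<alpha> (lower_wire n w t)"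

text \<open>Label of the chamber between positions q and q+1 (directly above the wire at
  position q) in state W; the wires passing below it are those at positions \<le> q.\<close>
definition chamber_label :: "nat \<Rightarrow> (int \<Rightarrow> int) \<Rightarrow> int \<Rightarrow> nat \<Rightarrow> int" where
  "chamber_label n W q i =
     \<lceil>real_of_int (GREATEST b. b \<in> W ` {..q} \<and> b mod int n = int i mod int n) / real n\<rceil>"

text \<open>A representative (indexed by 1..n) of the trajectory t(w).\<close>
definition traj :: "nat \<Rightarrow> nat list \<Rightarrow> nat \<Rightarrow> int" where
  "traj n w i =
     (let Wl = (id :: int \<Rightarrow> int); Wr = wires_after n w;
          ql = (THE q. Wl q = 1); qr = (THE q. Wr q = 1)
      in chamber_label n Wr qr i - chamber_label n Wl ql i)"

end

theory Submission
  imports Defs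
begin


definition sg :: "nat \<Rightarrow> nat \<Rightarrow> int \<Rightarrow> int" where
  "sg n i p = (if int n dvd (p - int i) then p + 1
               else if int n dvd (p - 1 - int i) then p - 1 else p)"

lemma cross_sg: "cross n i W = W \<circ> sg n i"
  by (rule ext) (simp add: cross_def sg_def mod_eq_dvd_iff)

lemma nd1: "2 \<le> n \<Longrightarrow> \<not> int n dvd 1"
  using dvd_imp_le_int[of 1 "int n"] by auto
lemma nd1': "2 \<le> n \<Longrightarrow> \<not> int n dvd (-1)"
  using nd1 by simp
lemma nd2: "3 \<le> n \<Longrightarrow> \<not> int n dvd 2"
  using dvd_imp_le_int[of 2 "int n"] by auto
lemma nd2': "3 \<le> n \<Longrightarrow> \<not> int n dvd (-2)"
  using nd2 by simp

lemma dvd_d: "int n dvd a \<Longrightarrow> int n dvd b \<Longrightarrow> c = a - b \<Longrightarrow> int n dvd c"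
  by (simp add: dvd_diff)

lemma sg_at: "int n dvd (p - int i) \<Longrightarrow> sg n i p = p + 1"
  by (simp add: sg_def)

lemma sg_at1: assumes "2 \<le> n" "int n dvd (p - int i)" shows "sg n i (p + 1) = p"
proof -
  have "\<not> int n dvd (p + 1 - int i)"
    using dvd_d[OF _ assms(2), of "p + 1 - int i" 1] nd1[OF assms(1)] by auto
  then show ?thesis using assms by (simp add: sg_def)
qed

lemma sg_at1': assumes "2 \<le> n" "int n dvd (p - 1 - int i)" shows "sg n i p = p - 1"
proof -
  have "\<not> int n dvd (p - int i)"
    using dvd_d[OF _ assms(2), of "p - int i" 1] nd1[OF assms(1)] by auto
  then show ?thesis using assms by (simp add: sg_def)
qed

lemma sg_fix: "\<not> int n dvd (p - int i) \<Longrightarrow> \<not> int n dvd (p - 1 - int i) \<Longrightarrow> sg n i p = p"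
  by (simp add: sg_def)

lemma sg_inv: assumes "2 \<le> n" shows "sg n i (sg n i p) = p"
proof (cases "int n dvd (p - int i)")
  case True then show ?thesis using sg_at sg_at1 assms by simp
next
  case F: False
  show ?thesis
  proof (cases "int n dvd (p - 1 - int i)")
    case True
    then have "int n dvd ((p - 1) - int i)" by simp
    then have "sg n i (p - 1 + 1) = p - 1" using sg_at1 assms by blast
    then show ?thesis using sg_at1'[OF assms True] using \<open>int n dvd _\<close> sg_at by simp
  next
    case False then show ?thesis using F sg_fix by simp
  qed
qed

lemma sg_per: "sg n i (p + int n) = sg n i p + int n"
proof -
  have a: "int n dvd (p + int n - int i) \<longleftrightarrow> int n dvd (p - int i)"
    using dvd_add_right_iff[of "int n" "int n" "p - int i"] by (simp add: algebra_simps)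
  have b: "int n dvd (p + int n - 1 - int i) \<longleftrightarrow> int n dvd (p - 1 - int i)"
    using dvd_add_right_iff[of "int n" "int n" "p - 1 - int i"] by (simp add: algebra_simps)
  show ?thesis unfolding sg_def a b by simp
qed

lemma sg_range: "sg n i p \<in> {p - 1, p, p + 1}"
  by (simp add: sg_def)



definition Pw :: "nat \<Rightarrow> nat list \<Rightarrow> int \<Rightarrow> int" where
  "Pw n v = foldl (\<lambda>f i. sg n i \<circ> f) id v"

lemma W_Nil[simp]: "wires_after n [] = id" by (simp add: wires_after_def)
lemma P_Nil[simp]: "Pw n [] = id" by (simp add: Pw_def)
lemma W_snoc[simp]: "wires_after n (v @ [i]) = wires_after n v \<circ> sg n i"
  by (simp add: wires_after_def cross_sg)
lemma P_snoc[simp]: "Pw n (v @ [i]) = sg n i \<circ> Pw n v"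
  by (simp add: Pw_def)

lemma WP: "2 \<le> n \<Longrightarrow> wires_after n v (Pw n v b) = b"
  by (induction v rule: rev_induct) (auto simp: sg_inv)
lemma PW: "2 \<le> n \<Longrightarrow> Pw n v (wires_after n v p) = p"
  by (induction v arbitrary: p rule: rev_induct) (auto simp: sg_inv)

lemma W_inj: "2 \<le> n \<Longrightarrow> wires_after n v p = wires_after n v q \<Longrightarrow> p = q"
  by (metis PW)
lemma P_inj: "2 \<le> n \<Longrightarrow> Pw n v p = Pw n v q \<Longrightarrow> p = q"
  by (metis WP)

lemma sg_perm: "sg n i (p + int n * m) = sg n i p + int n * m"
proof -
  have a: "int n dvd (p + int n * m - int i) \<longleftrightarrow> int n dvd (p - int i)"
    using dvd_add_right_iff[of "int n" "int n * m" "p - int i"] by (simp add: algebra_simps)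
  have b: "int n dvd (p + int n * m - 1 - int i) \<longleftrightarrow> int n dvd (p - 1 - int i)"
    using dvd_add_right_iff[of "int n" "int n * m" "p - 1 - int i"] by (simp add: algebra_simps)
  show ?thesis unfolding sg_def a b by simp
qed

lemma W_perm: "wires_after n v (p + int n * m) = wires_after n v p + int n * m"
  by (induction v arbitrary: p rule: rev_induct) (auto simp: sg_perm)
lemma P_perm: "Pw n v (p + int n * m) = Pw n v p + int n * m"
  by (induction v arbitrary: p rule: rev_induct) (auto simp: sg_perm)

lemma W_shift: assumes "int n dvd (q - p)" shows "wires_after n v q = wires_after n v p + (q - p)"
proof -
  obtain m where m: "q - p = int n * m" using assms by (auto elim: dvdE)
  have "wires_after n v (p + int n * m) = wires_after n v p + int n * m" by (rule W_perm)
  moreover have "q = p + int n * m" using m by simp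
  ultimately show ?thesis using m by metis
qed
lemma P_shift: assumes "int n dvd (q - p)" shows "Pw n v q = Pw n v p + (q - p)"
proof -
  obtain m where m: "q - p = int n * m" using assms by (auto elim: dvdE)
  have "Pw n v (p + int n * m) = Pw n v p + int n * m" by (rule P_perm)
  moreover have "q = p + int n * m" using m by simp
  ultimately show ?thesis using m by metis
qed

lemma foldl_cross_comp: "foldl (\<lambda>W i. cross n i W) (W0 \<circ> f) v = W0 \<circ> foldl (\<lambda>W i. cross n i W) f v"
  by (induction v arbitrary: f) (auto simp: cross_sg comp_assoc)

lemma W_Cons: "wires_after n (i # v) = sg n i \<circ> wires_after n v"
  unfolding wires_after_def using foldl_cross_comp[of n "sg n i" id v]
  by (simp add: cross_sg)

lemma phi_Cons: "phi_word n (i # v) = phi_gen n i \<circ> phi_word n v"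
  by (simp add: phi_word_def)

lemma small0: "int n dvd x \<Longrightarrow> \<bar>x\<bar> < int n \<Longrightarrow> x = 0"
  using dvd_imp_le_int[of x "int n"] by fastforce

lemma cyl_char: assumes "1 \<le> c" "c \<le> n" "int n dvd (p - int c)" shows "cyl_wire n p = c"
proof -
  have "(p - 1) mod int n = (int c - 1) mod int n"
    using assms(3) by (simp add: mod_eq_dvd_iff)
  also have "\<dots> = int c - 1" using assms by simp
  finally show ?thesis unfolding cyl_wire_def using assms by simp
qed

lemma cyl_props: assumes "1 \<le> n" shows "1 \<le> cyl_wire n p \<and> cyl_wire n p \<le> n \<and> int n dvd (p - int (cyl_wire n p))"
proof -
  have r: "0 \<le> (p - 1) mod int n" "(p - 1) mod int n < int n" using assms by auto
  have "int (cyl_wire n p) = (p - 1) mod int n + 1" unfolding cyl_wire_def using r by simp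
  moreover have "int n dvd ((p - 1) - (p - 1) mod int n)"
    by (simp add: mod_eq_dvd_iff[symmetric])
  ultimately show ?thesis using r unfolding cyl_wire_def by (auto simp: algebra_simps)
qed



lemma cyl_sg: assumes n: "2 \<le> n" and i: "i < n"
  shows "cyl_wire n (sg n i p) = phi_gen n i (cyl_wire n p)"
proof -
  define c where "c = cyl_wire n p"
  have c: "1 \<le> c" "c \<le> n" "int n dvd (p - int c)" using cyl_props[of n p] n unfolding c_def by auto
  show ?thesis
  proof (cases "int n dvd (p - int i)")
    case T: True
    have s: "sg n i p = p + 1" using T by (rule sg_at)
    have d: "int n dvd (int c - int i)" using dvd_d[OF T c(3), of "int c - int i"] by simp
    show ?thesis
    proof (cases "i = 0")
      case True
      have "int n dvd (int c - int n)" using dvd_d[OF d, of "int n" "int c - int n"] True by simp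
      moreover have "\<bar>int c - int n\<bar> < int n" using c by simp
      ultimately have "int c - int n = 0" by (rule small0)
      then have cn: "c = n" by simp
      have "int n dvd (p + 1 - int 1)" using T True by simp
      then have "cyl_wire n (p + 1) = 1" using cyl_char[of 1 n "p+1"] n by simp
      then show ?thesis using s True c_def cn by (simp add: phi_gen_def)
    next
      case False
      have "\<bar>int c - int i\<bar> < int n" using c False i by simp
      with d have "int c - int i = 0" by (rule small0)
      then have ci: "c = i" by simp
      have "int n dvd (p + 1 - int (i + 1))" using T by simp
      then have "cyl_wire n (p + 1) = i + 1" using cyl_char[of "i+1" n "p+1"] i by simp
      then show ?thesis using s False c_def ci by (simp add: phi_gen_def)
    qed
  next
    case F1: False
    show ?thesis
    proof (cases "int n dvd (p - 1 - int i)")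
      case T: True
      have s: "sg n i p = p - 1" using sg_at1'[OF n T] .
      have d: "int n dvd (int c - 1 - int i)" using dvd_d[OF T c(3), of "int c - 1 - int i"] by simp
      have "\<bar>int c - 1 - int i\<bar> < int n" using c i by simp
      with d have "int c - 1 - int i = 0" by (rule small0)
      then have ci: "c = i + 1" by simp
      show ?thesis
      proof (cases "i = 0")
        case True
        have "int n dvd (p - 1 - int n)" using dvd_d[OF T, of "int n" "p - 1 - int n"] True by simp
        then have "cyl_wire n (p - 1) = n" using cyl_char[of n n "p - 1"] n by simp
        then show ?thesis using s True ci c_def n by (simp add: phi_gen_def)
      next
        case False
        have "int n dvd (p - 1 - int i)" using T .
        then have "cyl_wire n (p - 1) = i" using cyl_char[of i n "p - 1"] i False by simp
        then show ?thesis using s False ci c_def by (simp add: phi_gen_def)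
      qed
    next
      case F2: False
      have s: "sg n i p = p" using sg_fix[OF F1 F2] .
      have c1: "c \<noteq> i" using F1 c(3) by auto
      have c2: "c \<noteq> i + 1" using F2 c(3) by (auto simp: algebra_simps)
      show ?thesis
      proof (cases "i = 0")
        case True
        have "c \<noteq> n" proof
          assume cn: "c = n"
          have "int n dvd (p - int c + int n)" using c(3) by simp
          then have "int n dvd (p - int i)" using cn True by simp
          then show False using F1 by simp
        qed
        then show ?thesis using s True c1 c2 c_def by (simp add: phi_gen_def)
      next
        case False
        then show ?thesis using s c1 c2 c_def by (simp add: phi_gen_def)
      qed
    qed
  qed
qed

lemma cyl_W: assumes "2 \<le> n" "word n v" shows "cyl_wire n (wires_after n v p) = phi_word n v (cyl_wire n p)"
  using assms(2)
proof (induction v arbitrary: p)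
  case Nil then show ?case by (simp add: phi_word_def)
next
  case (Cons i v)
  then have "i < n" "word n v" by (auto simp: word_def)
  then show ?case using Cons cyl_sg[OF assms(1)] by (simp add: W_Cons phi_Cons)
qed



lemma glide_cong: assumes n: "2 \<le> n" and wd: "word n w" and g: "is_glide n w"
  shows "\<exists>k::int. \<forall>p. int n dvd (wires_after n w p - p - k)"
proof -
  obtain k where k: "k < n" "\<forall>j\<in>{1..n}. phi_word n w j mod n = (j + k) mod n"
    using g unfolding is_glide_def by blast
  have "int n dvd (wires_after n w p - p - int k)" for p
  proof -
    define c where "c = cyl_wire n p"
    have c: "1 \<le> c" "c \<le> n" "int n dvd (p - int c)" using cyl_props[of n p] n unfolding c_def by auto
    have cw: "cyl_wire n (wires_after n w p) = phi_word n w c" using cyl_W[OF n wd] c_def by simp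
    have d1: "int n dvd (wires_after n w p - int (phi_word n w c))"
      using cyl_props[of n "wires_after n w p"] n cw by auto
    have "phi_word n w c mod n = (c + k) mod n" using k c by auto
    then have "int (phi_word n w c) mod int n = (int c + int k) mod int n"
      by (metis of_nat_add of_nat_mod)
    then have d2: "int n dvd (int (phi_word n w c) - int c - int k)"
      by (simp add: mod_eq_dvd_iff algebra_simps)
    have "int n dvd ((wires_after n w p - int (phi_word n w c)) + (int (phi_word n w c) - int c - int k) - (p - int c))"
      by (rule dvd_diff[OF dvd_add[OF d1 d2] c(3)])
    then show ?thesis by (simp add: algebra_simps)
  qed
  then show ?thesis by blast
qed

definition Dv :: "nat \<Rightarrow> nat list \<Rightarrow> int \<Rightarrow> int" where "Dv n w b = Pw n w b - b"

lemma D_cong: assumes n: "2 \<le> n" and wd: "word n w" and g: "is_glide n w"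
  shows "int n dvd (Dv n w a - Dv n w b)"
proof -
  obtain k where k: "\<forall>p. int n dvd (wires_after n w p - p - k)" using glide_cong[OF assms] by blast
  have "int n dvd (x - Pw n w x - k)" for x using k[rule_format, of "Pw n w x"] WP[OF n] by simp
  from this[of b] this[of a] have "int n dvd ((b - Pw n w b - k) - (a - Pw n w a - k))" by (rule dvd_diff)
  then show ?thesis unfolding Dv_def by (simp add: algebra_simps)
qed

lemma D_shift: "int n dvd (a - b) \<Longrightarrow> Dv n w a = Dv n w b"
  unfolding Dv_def using P_shift[of n a b w] by simp

lemma greatest_lemma:
  assumes n: "2 \<le> n" and i: "1 \<le> i" "i \<le> n"
    and S: "\<And>b. int n dvd (b - int i) \<Longrightarrow> (b \<in> S \<longleftrightarrow> b \<le> 1 + int n * c)"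
  shows "\<lceil>real_of_int (GREATEST b. b \<in> S \<and> b mod int n = int i mod int n) / real n\<rceil>
           = c + (if i = 1 then 1 else 0)"
proof -
  define b0 where "b0 = int n * c + (if i = 1 then 1 else int i - int n)"
  have b0d: "int n dvd (b0 - int i)" unfolding b0_def by (auto simp: algebra_simps)
  have b0S: "b0 \<in> S" using S[OF b0d] i unfolding b0_def by auto
  have G: "(GREATEST b. b \<in> S \<and> b mod int n = int i mod int n) = b0"
  proof (rule Greatest_equality)
    show "b0 \<in> S \<and> b0 mod int n = int i mod int n" using b0S b0d by (simp add: mod_eq_dvd_iff)
  next
    fix y assume y: "y \<in> S \<and> y mod int n = int i mod int n"
    then have yd: "int n dvd (y - int i)" by (simp add: mod_eq_dvd_iff)
    then have yle: "y \<le> 1 + int n * c" using S y by blast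
    have "int n dvd (y - b0)" using dvd_d[OF yd b0d, of "y - b0"] by simp
    then obtain t where t: "y - b0 = int n * t" by (auto elim: dvdE)
    have "y - b0 < int n" using yle i unfolding b0_def by (auto split: if_splits)
    then have "int n * t < int n * 1" using t by simp
    then have "t < 1" using n by (simp add: mult_less_cancel_left_pos)
    then have "int n * t \<le> 0" using n by (simp add: mult_nonneg_nonpos)
    then show "y \<le> b0" using t by simp
  qed
  have nr: "real n > 0" using n by simp
  show ?thesis
  proof (cases "i = 1")
    case True
    have "real_of_int b0 / real n = real_of_int c + 1 / real n"
      unfolding b0_def using True nr by (simp add: field_simps)
    moreover have "1 / real n \<le> 1" "0 < 1 / real n" using n nr by auto
    ultimately have "\<lceil>real_of_int b0 / real n\<rceil> = c + 1"
      by (intro ceiling_unique) auto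
    then show ?thesis using G True by simp
  next
    case False
    have "real_of_int b0 / real n = real_of_int c + (real i - real n) / real n"
      unfolding b0_def using False nr by (simp add: field_simps)
    moreover have "(real i - real n) / real n \<le> 0" using i nr by (simp add: divide_nonpos_pos)
    moreover have "-1 < (real i - real n) / real n" using i nr False by (simp add: field_simps)
    ultimately have "\<lceil>real_of_int b0 / real n\<rceil> = c"
      by (intro ceiling_unique) auto
    then show ?thesis using G False by simp
  qed
qed

lemma traj_formula: assumes n: "2 \<le> n" and wd: "word n w" and g: "is_glide n w"
  and i: "1 \<le> i" "i \<le> n"
  shows "int n * traj n w i = Dv n w 1 - Dv n w (int i)"
proof -
  obtain c where c: "Dv n w 1 - Dv n w (int i) = int n * c" using D_cong[OF n wd g, of 1 "int i"] unfolding dvd_def by blast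
  have q1: "(THE q. id q = (1::int)) = 1" by simp
  have q2: "(THE q. wires_after n w q = 1) = Pw n w 1"
    by (rule the_equality) (use WP[OF n] PW[OF n] in metis)+
  have L: "chamber_label n id 1 i = 0 + (if i = 1 then 1 else 0)"
    unfolding chamber_label_def
    by (rule greatest_lemma[OF n i]) auto
  have R: "chamber_label n (wires_after n w) (Pw n w 1) i = c + (if i = 1 then 1 else 0)"
    unfolding chamber_label_def
  proof (rule greatest_lemma[OF n i])
    fix b assume bd: "int n dvd (b - int i)"
    have "b \<in> wires_after n w ` {..Pw n w 1} \<longleftrightarrow> Pw n w b \<le> Pw n w 1"
    proof
      assume "b \<in> wires_after n w ` {..Pw n w 1}"
      then obtain p where "p \<le> Pw n w 1" "b = wires_after n w p" by auto
      then show "Pw n w b \<le> Pw n w 1" using PW[OF n] by simp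
    next
      assume a: "Pw n w b \<le> Pw n w 1"
      have "b = wires_after n w (Pw n w b)" using WP[OF n] by simp
      then show "b \<in> wires_after n w ` {..Pw n w 1}" using a by blast
    qed
    also have "Pw n w b = Pw n w (int i) + (b - int i)" using P_shift[OF bd] .
    finally show "b \<in> wires_after n w ` {..Pw n w 1} \<longleftrightarrow> b \<le> 1 + int n * c"
      using c unfolding Dv_def by (auto simp: algebra_simps)
  qed
  show ?thesis unfolding traj_def Let_def q1 q2 L R using c by simp
qed



lemma nd_shift: assumes "int n dvd y" "\<not> int n dvd d" "x - y = d" shows "\<not> int n dvd x"
proof
  assume "int n dvd x" then have "int n dvd (x - y)" using assms(1) by (rule dvd_diff)
  then show False using assms by simp
qed
lemma nd_shift': assumes "int n dvd y" "\<not> int n dvd d" "y - x = d" shows "\<not> int n dvd x"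
proof
  assume "int n dvd x" then have "int n dvd (y - x)" using assms(1) by (intro dvd_diff)
  then show False using assms by simp
qed
lemma d_shift: assumes "int n dvd y" "int n dvd d" "x - y = d" shows "int n dvd x"
proof -
  have "int n dvd (y + d)" using assms(1,2) by (rule dvd_add)
  moreover have "y + d = x" using assms(3) by simp
  ultimately show ?thesis by simp
qed

lemma d_shift': assumes "int n dvd y" "int n dvd d" "y - x = d" shows "int n dvd x"
proof -
  have "int n dvd (y - d)" using assms(1,2) by (rule dvd_diff)
  moreover have "y - d = x" using assms(3) by simp
  ultimately show ?thesis by simp
qed

lemma sgv: assumes n: "2 \<le> n" and q: "int n dvd (q - int j)"
  shows "sg n j q = q + 1" "sg n j (q + 1) = q"
proof -
  show "sg n j q = q + 1" using sg_at[OF q] .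
  show "sg n j (q + 1) = q" using sg_at1[OF n q] .
qed

lemma sgv3: assumes n: "3 \<le> n" and q: "int n dvd (q - int j)"
  shows "sg n j (q + 2) = q + 2" "sg n j (q - 1) = q - 1"
proof -
  have n2: "\<not> int n dvd 2" "\<not> int n dvd (-2)" "\<not> int n dvd 1" "\<not> int n dvd (-1)"
    using nd2[OF n] nd2'[OF n] nd1[of n] nd1'[of n] n by auto
  have a: "\<not> int n dvd (q + 2 - int j)" by (rule nd_shift[OF q n2(1)]) simp
  have b: "\<not> int n dvd (q + 2 - 1 - int j)" by (rule nd_shift[OF q n2(3)]) simp
  show "sg n j (q + 2) = q + 2" by (rule sg_fix[OF a b])
  have c: "\<not> int n dvd (q - 1 - int j)" by (rule nd_shift[OF q n2(4)]) simp
  have d: "\<not> int n dvd (q - 1 - 1 - int j)" by (rule nd_shift[OF q n2(2)]) simp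
  show "sg n j (q - 1) = q - 1" by (rule sg_fix[OF c d])
qed

lemma braid_sg: assumes n: "3 \<le> n" and ij: "int n dvd (int i - int j - 1)"
  shows "sg n i (sg n j (sg n i r)) = sg n j (sg n i (sg n j r))"
proof -
  have n2: "\<not> int n dvd 2" "\<not> int n dvd (-2)" "\<not> int n dvd 1" "\<not> int n dvd (-1)"
    using nd2[OF n] nd2'[OF n] nd1[of n] nd1'[of n] n by auto
  have n': "2 \<le> n" using n by simp
  show ?thesis
  proof (cases "int n dvd (r - int j)")
    case True
    have i1: "int n dvd (r + 1 - int i)" by (rule d_shift'[OF True ij]) simp
    have "sg n i r = r" using sgv3(2)[OF n i1] by simp
    moreover have "sg n j r = r + 1" "sg n j (r + 2) = r + 2" using sgv[OF n' True] sgv3[OF n True] by auto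
    moreover have "sg n i (r + 1) = r + 2" using sgv[OF n' i1] by simp
    ultimately show ?thesis by simp
  next
    case F1: False
    show ?thesis
    proof (cases "int n dvd (r - int i)")
      case True
      have j1: "int n dvd (r - 1 - int j)" by (rule d_shift[OF True ij]) simp
      have "sg n i r = r + 1" using sgv[OF n' True] by simp
      moreover have "sg n j (r + 1) = r + 1" using sgv3(1)[OF n j1] by (simp add: algebra_simps)
      moreover have "sg n i (r + 1) = r" using sgv[OF n' True] by simp
      moreover have "sg n j r = r - 1" using sgv(2)[OF n' j1] by simp
      moreover have "sg n i (r - 1) = r - 1" using sgv3(2)[OF n True] by simp
      moreover have "sg n j (r - 1) = r" using sgv(1)[OF n' j1] by simp
      ultimately show ?thesis by simp
    next
      case F2: False
      show ?thesis
      proof (cases "int n dvd (r - 1 - int i)")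
        case True
        have j2: "int n dvd (r - 2 - int j)" by (rule d_shift[OF True ij]) simp
        have "sg n i r = r - 1" using sgv(2)[OF n' True] by simp
        moreover have "sg n j (r - 1) = r - 2" using sgv(2)[OF n' j2] by simp
        moreover have "sg n i (r - 2) = r - 2" using sgv3(2)[OF n True] by simp
        moreover have "sg n j r = r" using sgv3(1)[OF n j2] by simp
        ultimately show ?thesis by simp
      next
        case F3: False
        have "\<not> int n dvd (r - 1 - int j)"
        proof
          assume "int n dvd (r - 1 - int j)"
          then have "int n dvd (r - int i)" by (rule d_shift'[OF _ ij]) simp
          then show False using F2 by simp
        qed
        then have "sg n j r = r" using sg_fix F1 by simp
        moreover have "sg n i r = r" using sg_fix F2 F3 by simp
        ultimately show ?thesis by simp
      qed
    qed
  qed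
qed



lemma comm_aux: assumes n: "2 \<le> n"
  and c0: "\<not> int n dvd (int i - int j)" and c1: "\<not> int n dvd (int i - int j - 1)"
  and c2: "\<not> int n dvd (int j - int i - 1)"
  and r: "int n dvd (r - int i) \<or> int n dvd (r - 1 - int i)"
  shows "sg n j r = r \<and> sg n j (sg n i r) = sg n i r"
  using r
proof
  assume h: "int n dvd (r - int i)"
  have s: "sg n i r = r + 1" using sg_at[OF h] .
  have a: "\<not> int n dvd (r - int j)" by (rule nd_shift[OF h c0]) simp
  have b: "\<not> int n dvd (r - 1 - int j)" by (rule nd_shift[OF h c1]) simp
  have c: "\<not> int n dvd (r + 1 - int j)" by (rule nd_shift'[OF h c2]) simp
  have d: "\<not> int n dvd (r + 1 - 1 - int j)" using a by simp
  show ?thesis using s sg_fix[OF a b] sg_fix[OF c d] by simp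
next
  assume h: "int n dvd (r - 1 - int i)"
  have s: "sg n i r = r - 1" using sg_at1'[OF n h] .
  have a: "\<not> int n dvd (r - int j)" by (rule nd_shift'[OF h c2]) simp
  have b: "\<not> int n dvd (r - 1 - int j)" by (rule nd_shift[OF h c0]) simp
  have c: "\<not> int n dvd (r - 1 - 1 - int j)" by (rule nd_shift[OF h c1]) simp
  show ?thesis using s sg_fix[OF a b] sg_fix[OF b c] by simp
qed

lemma comm_sg: assumes n: "2 \<le> n"
  and c0: "\<not> int n dvd (int i - int j)" and c1: "\<not> int n dvd (int i - int j - 1)"
  and c2: "\<not> int n dvd (int j - int i - 1)"
  shows "sg n i (sg n j r) = sg n j (sg n i r)"
proof -
  have c0': "\<not> int n dvd (int j - int i)" using c0 dvd_minus_iff[of "int n" "int j - int i"] by simp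
  consider "int n dvd (r - int i) \<or> int n dvd (r - 1 - int i)"
    | "int n dvd (r - int j) \<or> int n dvd (r - 1 - int j)"
    | "\<not> int n dvd (r - int i)" "\<not> int n dvd (r - 1 - int i)" "\<not> int n dvd (r - int j)" "\<not> int n dvd (r - 1 - int j)"
    by blast
  then show ?thesis
  proof cases
    case 1 then show ?thesis using comm_aux[OF n c0 c1 c2] by simp
  next
    case 2 then show ?thesis using comm_aux[OF n c0' c2 c1] by simp
  next
    case 3 then show ?thesis using sg_fix by simp
  qed
qed

lemma step_app: "hat_step n x y \<Longrightarrow> hat_step n (x @ c) (y @ c)"
proof (induction rule: hat_step.induct)
  case (square a i b) then show ?case using hat_step.square[of n a i "b @ c"] by simp
next
  case (braid i j a b) then show ?case using hat_step.braid[of i j n a "b @ c"] by simp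
next
  case (comm i j a b) then show ?case using hat_step.comm[of i j n a "b @ c"] by simp
qed

lemma eq_app: "hat_eq n x y \<Longrightarrow> hat_eq n (x @ c) (y @ c)"
  unfolding hat_eq_def
proof (induction rule: rtranclp_induct)
  case base then show ?case by simp
next
  case (step y z)
  then have "(sup (hat_step n) (hat_step n)\<inverse>\<inverse>) (y @ c) (z @ c)" using step_app by auto
  then show ?case by (rule rtranclp.rtrancl_into_rtrancl[OF step.IH])
qed

lemma eq_refl: "hat_eq n x x" by (simp add: hat_eq_def)
lemma eq_trans: "hat_eq n x y \<Longrightarrow> hat_eq n y z \<Longrightarrow> hat_eq n x z"
  unfolding hat_eq_def by (rule rtranclp_trans)
lemma eq_step: "hat_step n x y \<Longrightarrow> hat_eq n x y"
  unfolding hat_eq_def by (rule r_into_rtranclp) simp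
lemma eq_step_rev: "hat_step n y x \<Longrightarrow> hat_eq n x y"
  unfolding hat_eq_def by (rule r_into_rtranclp) simp




definition asc :: "nat \<Rightarrow> (int \<Rightarrow> int) \<Rightarrow> nat \<Rightarrow> bool" where
  "asc n W i = (\<forall>p. int n dvd (p - int i) \<longrightarrow> W p < W (p + 1))"

definition good :: "nat \<Rightarrow> nat list \<Rightarrow> bool" where
  "good n v = (\<forall>t<length v. asc n (wires_after n (take t v)) (v ! t))"

lemma good_Nil[simp]: "good n []" by (simp add: good_def)

lemma good_snoc: "good n (v @ [i]) \<longleftrightarrow> good n v \<and> asc n (wires_after n v) i"
proof -
  have "good n (v @ [i]) \<longleftrightarrow> (\<forall>t<length v + 1. asc n (wires_after n (take t (v @ [i]))) ((v @ [i]) ! t))"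
    by (simp add: good_def)
  also have "\<dots> \<longleftrightarrow> (\<forall>t<length v. asc n (wires_after n (take t (v @ [i]))) ((v @ [i]) ! t)) \<and>
      asc n (wires_after n (take (length v) (v @ [i]))) ((v @ [i]) ! length v)"
    by (auto simp: less_Suc_eq)
  also have "\<dots> \<longleftrightarrow> good n v \<and> asc n (wires_after n v) i"
    by (simp add: good_def nth_append)
  finally show ?thesis .
qed

lemma asc_at: assumes "int n dvd (p - int i)"
  shows "asc n (wires_after n v) i \<longleftrightarrow> wires_after n v p < wires_after n v (p + 1)"
proof
  assume "asc n (wires_after n v) i" then show "wires_after n v p < wires_after n v (p + 1)"
    using assms unfolding asc_def by blast
next
  assume h: "wires_after n v p < wires_after n v (p + 1)"
  show "asc n (wires_after n v) i" unfolding asc_def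
  proof (intro allI impI)
    fix p' assume p': "int n dvd (p' - int i)"
    have d: "int n dvd (p' - p)" by (rule d_shift'[OF p' assms]) simp
    have d1: "int n dvd ((p' + 1) - (p + 1))" using d by simp
    show "wires_after n v p' < wires_after n v (p' + 1)"
      using W_shift[OF d, of v] W_shift[OF d1, of v] h by simp
  qed
qed

lemma W_cancel: assumes n: "2 \<le> n" and h: "wires_after n (x @ [i]) = wires_after n y"
  shows "wires_after n x = wires_after n y \<circ> sg n i"
proof
  fix r
  have h': "wires_after n x \<circ> sg n i = wires_after n y" using h by simp
  have "wires_after n y (sg n i r) = wires_after n x (sg n i (sg n i r))"
    using fun_cong[OF h', of "sg n i r"] by simp
  then show "wires_after n x r = (wires_after n y \<circ> sg n i) r" using sg_inv[OF n] by simp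
qed

lemma mod1: assumes "2 \<le> n" "int n dvd (x - 1)" shows "x mod int n = 1"
proof -
  have "x mod int n = 1 mod int n" using assms(2) by (simp add: mod_eq_dvd_iff)
  then show ?thesis using assms(1) by simp
qed

lemma modm1: assumes "2 \<le> n" "int n dvd (x + 1)" shows "x mod int n = int n - 1"
proof -
  have "x mod int n = (-1) mod int n" using assms(2) by (simp add: mod_eq_dvd_iff)
  also have "(-1) mod int n = int n - 1" using assms(1) by (simp add: zmod_minus1)
  finally show ?thesis .
qed

lemma mod_not: assumes n: "2 \<le> n" and c0: "\<not> int n dvd x" and c1: "\<not> int n dvd (x - 1)"
   and c2: "\<not> int n dvd (x + 1)"
  shows "x mod int n \<notin> {0, 1, int n - 1}"
proof -
  have "x mod int n \<noteq> 0" using c0 by (simp add: mod_eq_0_iff_dvd)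
  moreover have "x mod int n \<noteq> 1"
  proof
    assume "x mod int n = 1" then have "x mod int n = 1 mod int n" using n by simp
    then show False using c1 by (simp add: mod_eq_dvd_iff)
  qed
  moreover have "x mod int n \<noteq> int n - 1"
  proof
    assume "x mod int n = int n - 1" then have "x mod int n = (-1) mod int n" using n by (simp add: zmod_minus1)
    then show False using c2 by (simp add: mod_eq_dvd_iff)
  qed
  ultimately show ?thesis by simp
qed



definition EX_prop :: "nat \<Rightarrow> nat list \<Rightarrow> nat \<Rightarrow> bool" where
  "EX_prop n v i = (\<exists>v'. word n v' \<and> good n v' \<and> length v' + 1 = length v \<and>
       hat_eq n v (v' @ [i]) \<and> wires_after n (v' @ [i]) = wires_after n v)"

lemma word_snoc[simp]: "word n (v @ [i]) \<longleftrightarrow> word n v \<and> i < n"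
  by (auto simp: word_def)

lemma W_app: "wires_after n (v @ w) = foldl (\<lambda>W i. W \<circ> sg n i) (wires_after n v) w"
  by (induction w rule: rev_induct) (simp_all del: W_snoc add: W_snoc[of n "v @ _", simplified])

lemma exch: assumes n: "2 \<le> n"
  shows "length v = m \<Longrightarrow> word n v \<Longrightarrow> good n v \<Longrightarrow> i < n \<Longrightarrow> int n dvd (p - int i) \<Longrightarrow>
         wires_after n v (p + 1) < wires_after n v p \<Longrightarrow> EX_prop n v i"
proof (induction m arbitrary: v i p rule: less_induct)
  case (less m)
  note prems = less.prems
  show ?case
  proof (cases v rule: rev_exhaust)
    case Nil then show ?thesis using prems by simp
  next
    case (snoc u j)
    define Wu where "Wu = wires_after n u"
    define Wv where "Wv = wires_after n v"
    have Wv: "Wv = Wu \<circ> sg n j" unfolding Wv_def Wu_def snoc by simp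
    have gu: "good n u" and aj: "asc n Wu j" using prems(3) snoc good_snoc unfolding Wu_def by auto
    have wu: "word n u" and jn: "j < n" using prems(2) snoc by auto
    have lu: "length u < m" using prems(1) snoc by simp
    have hp: "int n dvd (p - int i)" and desc: "Wv (p + 1) < Wv p" using prems Wv_def by auto
    have IH: "\<And>u' i' p'. length u' < m \<Longrightarrow> word n u' \<Longrightarrow> good n u' \<Longrightarrow> i' < n \<Longrightarrow> int n dvd (p' - int i') \<Longrightarrow>
         wires_after n u' (p' + 1) < wires_after n u' p' \<Longrightarrow> EX_prop n u' i'"
      using less.IH by blast
    show ?thesis
    proof (cases "j = i")
      case True
      show ?thesis unfolding EX_prop_def
        by (rule exI[of _ u]) (use wu gu snoc True in \<open>simp add: eq_refl\<close>)
    next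
      case ji: False
      have c0: "\<not> int n dvd (int i - int j)"
      proof
        assume "int n dvd (int i - int j)"
        moreover have "\<bar>int i - int j\<bar> < int n" using prems(4) jn by simp
        ultimately have "int i - int j = 0" by (rule small0)
        then show False using ji by simp
      qed
      have Wu_of: "Wu = Wv \<circ> sg n j" using Wv sg_inv[OF n] by (auto simp: fun_eq_iff)
      consider (A) "int n dvd (int i - int j - 1)" | (B) "int n dvd (int j - int i - 1)"
        | (C) "\<not> int n dvd (int i - int j - 1)" "\<not> int n dvd (int j - int i - 1)" by blast
      then show ?thesis
      proof cases
        case C
        have ca: "sg n j p = p \<and> sg n j (sg n i p) = sg n i p" using comm_aux[OF n c0 C(1) C(2)] hp by simp
        have sp: "sg n i p = p + 1" using sg_at[OF hp] .
        have "Wu p = Wv p" "Wu (p + 1) = Wv (p + 1)" using ca sp Wu_of by auto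
        then have "wires_after n u (p + 1) < wires_after n u p" using desc Wu_def by simp
        then have "EX_prop n u i" using IH[OF lu wu gu prems(4) hp] by simp
        then obtain u' where u': "word n u'" "good n u'" "length u' + 1 = length u"
          "hat_eq n u (u' @ [i])" "wires_after n (u' @ [i]) = Wu" unfolding EX_prop_def Wu_def by blast
        have Wu': "wires_after n u' = Wu \<circ> sg n i" using W_cancel[OF n, of u' i u] u'(5) Wu_def by simp
        have c0': "\<not> int n dvd (int j - int i)" using c0 dvd_minus_iff[of "int n" "int j - int i"] by simp
        have asc': "asc n (wires_after n u') j" unfolding asc_def
        proof (intro allI impI)
          fix q assume hq: "int n dvd (q - int j)"
          have cb: "sg n i q = q \<and> sg n i (sg n j q) = sg n j q" using comm_aux[OF n c0' C(2) C(1)] hq by simp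
          have "sg n j q = q + 1" using sg_at[OF hq] .
          then have "wires_after n u' q = Wu q" "wires_after n u' (q + 1) = Wu (q + 1)" using cb Wu' by auto
          moreover have "Wu q < Wu (q + 1)" using aj hq unfolding asc_def by blast
          ultimately show "wires_after n u' q < wires_after n u' (q + 1)" by simp
        qed
        have c2': "\<not> int n dvd (int i - int j + 1)"
        proof
          assume "int n dvd (int i - int j + 1)"
          then obtain k where "int i - int j + 1 = int n * k" by (auto elim: dvdE)
          then have "int j - int i - 1 = int n * (- k)" by simp
          then show False using C(2) by (metis dvd_triv_left)
        qed
        have cond: "(int i - int j) mod int n \<notin> {0, 1, int n - 1}"
          using mod_not[OF n c0 C(1) c2'] .
        have comm: "sg n i (sg n j r) = sg n j (sg n i r)" for r using comm_sg[OF n c0 C(1) C(2)] .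
        show ?thesis unfolding EX_prop_def
        proof (intro exI[of _ "u' @ [j]"] conjI)
          show "word n (u' @ [j])" using u'(1) jn by simp
          show "good n (u' @ [j])" using u'(2) asc' good_snoc by simp
          show "length (u' @ [j]) + 1 = length v" using u'(3) snoc by simp
          have "hat_eq n v (u' @ [i] @ [j])" using eq_app[OF u'(4), of "[j]"] snoc by simp
          moreover have "hat_step n (u' @ [i, j] @ []) (u' @ [j, i] @ [])"
            using hat_step.comm[OF cond, of u' "[]"] .
          ultimately show "hat_eq n v ((u' @ [j]) @ [i])" using eq_trans eq_step by fastforce
          show "wires_after n ((u' @ [j]) @ [i]) = wires_after n v"
            using Wu' Wv Wv_def comm sg_inv[OF n] by (auto simp: fun_eq_iff W_app)
        qed
      next
        case A
        define q where "q = p - 1"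
        have pq: "p = q + 1" unfolding q_def by simp
        have hq: "int n dvd (q - int j)" by (rule d_shift[OF hp A]) (simp add: q_def)
        have sjq: "sg n j q = q + 1" "sg n j (q + 1) = q" using sgv[OF n hq] by auto
        have Wvq: "Wv q = Wu (q + 1)" "Wv (q + 1) = Wu q" using Wv sjq by auto
        have "Wu q < Wu (q + 1)" using aj hq unfolding asc_def by blast
        then have ab: "Wv (q + 1) < Wv q" using Wvq by simp
        have bc: "Wv (q + 2) < Wv (q + 1)" using desc pq by (simp add: add.assoc)
        have n3: "3 \<le> n"
        proof (rule ccontr)
          assume "\<not> 3 \<le> n" then have n2: "n = 2" using n by simp
          have "int n dvd ((q + 2) - q)" using n2 by simp
          then have "Wv (q + 2) = Wv q + 2" using W_shift[of n "q + 2" q v] Wv_def n2 by simp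
          then show False using ab bc by simp
        qed
        have i1: "int n dvd ((q + 1) - int i)" using hp pq by simp
        have sj2: "sg n j (q + 2) = q + 2" using sgv3(1)[OF n3 hq] .
        have si: "sg n i (q + 1) = q + 2" "sg n i (q + 2) = q + 1" "sg n i q = q"
          using sgv[OF n i1] sgv3(2)[OF n3 i1] by (auto simp: add.assoc)
        have Wu3: "Wu q = Wv (q + 1)" "Wu (q + 1) = Wv q" "Wu (q + 2) = Wv (q + 2)"
          using Wu_of sjq sj2 by auto
        have "wires_after n u (p + 1) < wires_after n u p"
          using Wu3 bc ab Wu_def pq by (simp add: add.assoc)
        then have "EX_prop n u i" using IH[OF lu wu gu prems(4) hp] by simp
        then obtain u1 where u1: "word n u1" "good n u1" "length u1 + 1 = length u"
          "hat_eq n u (u1 @ [i])" "wires_after n (u1 @ [i]) = Wu" unfolding EX_prop_def Wu_def by blast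
        have Wu1: "wires_after n u1 = Wu \<circ> sg n i" using W_cancel[OF n, of u1 i u] u1(5) Wu_def by simp
        have Wu1v: "wires_after n u1 q = Wv (q + 1)" "wires_after n u1 (q + 1) = Wv (q + 2)"
           "wires_after n u1 (q + 2) = Wv q"
          using Wu1 si Wu3 by auto
        have l1: "length u1 < m" using u1(3) lu by simp
        have "wires_after n u1 (q + 1) < wires_after n u1 q" using Wu1v bc by simp
        then have "EX_prop n u1 j" using IH[OF l1 u1(1) u1(2) jn hq] by simp
        then obtain u2 where u2: "word n u2" "good n u2" "length u2 + 1 = length u1"
          "hat_eq n u1 (u2 @ [j])" "wires_after n (u2 @ [j]) = wires_after n u1" unfolding EX_prop_def by blast
        have Wu2: "wires_after n u2 = wires_after n u1 \<circ> sg n j" using W_cancel[OF n, of u2 j u1] u2(5) by simp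
        have Wu2v: "wires_after n u2 q = Wv (q + 2)" "wires_after n u2 (q + 1) = Wv (q + 1)"
           "wires_after n u2 (q + 2) = Wv q"
          using Wu2 sjq sj2 Wu1v by auto
        have br: "sg n i (sg n j (sg n i r)) = sg n j (sg n i (sg n j r))" for r using braid_sg[OF n3 A] .
        have as1: "asc n (wires_after n u2) i"
          using asc_at[OF i1, of u2] Wu2v ab by (simp add: add.assoc)
        have as2: "asc n (wires_after n (u2 @ [i])) j"
          using asc_at[OF hq, of "u2 @ [i]"] Wu2v si ab bc by simp
        show ?thesis unfolding EX_prop_def
        proof (intro exI[of _ "u2 @ [i, j]"] conjI)
          show "word n (u2 @ [i, j])" using u2(1) jn prems(4) by (simp add: word_def)
          show "good n (u2 @ [i, j])" using u2(2) as1 as2 good_snoc[of n "u2 @ [i]" j] good_snoc[of n u2 i] by simp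
          show "length (u2 @ [i, j]) + 1 = length v" using u2(3) u1(3) snoc by simp
          have "hat_eq n v (u1 @ [i] @ [j])" using eq_app[OF u1(4), of "[j]"] snoc by simp
          moreover have "hat_eq n (u1 @ [i] @ [j]) (u2 @ [j] @ [i] @ [j])" using eq_app[OF u2(4), of "[i, j]"] by simp
          moreover have "hat_step n (u2 @ [i, j, i] @ []) (u2 @ [j, i, j] @ [])"
            by (rule hat_step.braid) (use mod1[OF n A] in simp)
          ultimately show "hat_eq n v ((u2 @ [i, j]) @ [i])"
            using eq_trans eq_step_rev by fastforce
          show "wires_after n ((u2 @ [i, j]) @ [i]) = wires_after n v"
            using Wu2 Wu1 Wv Wv_def br sg_inv[OF n] by (auto simp: fun_eq_iff W_app)
        qed
      next
        case B
        have hj: "int n dvd ((p + 1) - int j)" by (rule d_shift'[OF hp B]) simp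
        have sj: "sg n j (p + 1) = p + 2" "sg n j (p + 2) = p + 1"
          using sgv[OF n hj] by (auto simp: add.assoc)
        have Wvp: "Wv (p + 1) = Wu (p + 2)" "Wv (p + 2) = Wu (p + 1)" using Wv sj by auto
        have "Wu (p + 1) < Wu (p + 1 + 1)" using aj hj unfolding asc_def by blast
        then have bc: "Wv (p + 2) < Wv (p + 1)" using Wvp by (simp add: add.assoc)
        have ab: "Wv (p + 1) < Wv p" using desc .
        have n3: "3 \<le> n"
        proof (rule ccontr)
          assume "\<not> 3 \<le> n" then have n2: "n = 2" using n by simp
          have "int n dvd ((p + 2) - p)" using n2 by simp
          then have "Wv (p + 2) = Wv p + 2" using W_shift[of n "p + 2" p v] Wv_def n2 by simp
          then show False using ab bc by simp
        qed
        have sj0: "sg n j p = p" using sgv3(2)[OF n3 hj] by simp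
        have si: "sg n i p = p + 1" "sg n i (p + 1) = p" "sg n i (p + 2) = p + 2"
          using sgv[OF n hp] sgv3(1)[OF n3 hp] by auto
        have Wu3: "Wu p = Wv p" "Wu (p + 1) = Wv (p + 2)" "Wu (p + 2) = Wv (p + 1)"
          using Wu_of sj sj0 by auto
        have "wires_after n u (p + 1) < wires_after n u p"
          using Wu3 bc ab Wu_def by simp
        then have "EX_prop n u i" using IH[OF lu wu gu prems(4) hp] by simp
        then obtain u1 where u1: "word n u1" "good n u1" "length u1 + 1 = length u"
          "hat_eq n u (u1 @ [i])" "wires_after n (u1 @ [i]) = Wu" unfolding EX_prop_def Wu_def by blast
        have Wu1: "wires_after n u1 = Wu \<circ> sg n i" using W_cancel[OF n, of u1 i u] u1(5) Wu_def by simp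
        have Wu1v: "wires_after n u1 p = Wv (p + 2)" "wires_after n u1 (p + 1) = Wv p"
           "wires_after n u1 (p + 2) = Wv (p + 1)"
          using Wu1 si Wu3 by auto
        have l1: "length u1 < m" using u1(3) lu by simp
        have "wires_after n u1 (p + 1 + 1) < wires_after n u1 (p + 1)" using Wu1v ab by (simp add: add.assoc)
        then have "EX_prop n u1 j" using IH[OF l1 u1(1) u1(2) jn hj] by simp
        then obtain u2 where u2: "word n u2" "good n u2" "length u2 + 1 = length u1"
          "hat_eq n u1 (u2 @ [j])" "wires_after n (u2 @ [j]) = wires_after n u1" unfolding EX_prop_def by blast
        have Wu2: "wires_after n u2 = wires_after n u1 \<circ> sg n j" using W_cancel[OF n, of u2 j u1] u2(5) by simp
        have Wu2v: "wires_after n u2 p = Wv (p + 2)" "wires_after n u2 (p + 1) = Wv (p + 1)"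
           "wires_after n u2 (p + 2) = Wv p"
          using Wu2 sj sj0 Wu1v by auto
        have br: "sg n i (sg n j (sg n i r)) = sg n j (sg n i (sg n j r))" for r
          using braid_sg[OF n3 B, of r] by simp
        have as1: "asc n (wires_after n u2) i"
          using asc_at[OF hp, of u2] Wu2v bc by simp
        have as2: "asc n (wires_after n (u2 @ [i])) j"
          using asc_at[OF hj, of "u2 @ [i]"] Wu2v si ab bc by (simp add: add.assoc)
        have B': "int n dvd (int i - int j + 1)"
        proof -
          obtain k where "int j - int i - 1 = int n * k" using B by (auto elim: dvdE)
          then have "int i - int j + 1 = int n * (- k)" by simp
          then show ?thesis by (metis dvd_triv_left)
        qed
        show ?thesis unfolding EX_prop_def
        proof (intro exI[of _ "u2 @ [i, j]"] conjI)
          show "word n (u2 @ [i, j])" using u2(1) jn prems(4) by (simp add: word_def)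
          show "good n (u2 @ [i, j])" using u2(2) as1 as2 good_snoc[of n "u2 @ [i]" j] good_snoc[of n u2 i] by simp
          show "length (u2 @ [i, j]) + 1 = length v" using u2(3) u1(3) snoc by simp
          have "hat_eq n v (u1 @ [i] @ [j])" using eq_app[OF u1(4), of "[j]"] snoc by simp
          moreover have "hat_eq n (u1 @ [i] @ [j]) (u2 @ [j] @ [i] @ [j])" using eq_app[OF u2(4), of "[i, j]"] by simp
          moreover have "hat_step n (u2 @ [i, j, i] @ []) (u2 @ [j, i, j] @ [])"
            by (rule hat_step.braid) (use modm1[OF n B'] in simp)
          ultimately show "hat_eq n v ((u2 @ [i, j]) @ [i])"
            using eq_trans eq_step_rev by fastforce
          show "wires_after n ((u2 @ [i, j]) @ [i]) = wires_after n v"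
            using Wu2 Wu1 Wv Wv_def br sg_inv[OF n] by (auto simp: fun_eq_iff W_app)
        qed
      qed
    qed
  qed
qed



lemma reduced_good: assumes n: "2 \<le> n" and r: "reduced_word n w" shows "good n w"
proof -
  have wd: "word n w" using r by (simp add: reduced_word_def)
  have "t \<le> length w \<Longrightarrow> good n (take t w)" for t
  proof (induction t)
    case 0 then show ?case by simp
  next
    case (Suc t)
    then have tl: "t < length w" by simp
    define x where "x = w ! t"
    have tk: "take (Suc t) w = take t w @ [x]" using tl by (simp add: take_Suc_conv_app_nth x_def)
    have g: "good n (take t w)" using Suc by simp
    have xn: "x < n" using wd tl unfolding word_def x_def by simp
    have "asc n (wires_after n (take t w)) x"
    proof (rule ccontr)
      assume na: "\<not> asc n (wires_after n (take t w)) x"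
      then obtain p where hp: "int n dvd (p - int x)"
        and ne: "\<not> wires_after n (take t w) p < wires_after n (take t w) (p + 1)"
        unfolding asc_def by blast
      have "wires_after n (take t w) p \<noteq> wires_after n (take t w) (p + 1)"
        using W_inj[OF n] by fastforce
      then have desc: "wires_after n (take t w) (p + 1) < wires_after n (take t w) p" using ne by simp
      have wt: "word n (take t w)" using wd by (auto simp: word_def dest: in_set_takeD)
      have "EX_prop n (take t w) x" by (rule exch[OF n refl wt g xn hp desc])
      then obtain v' where v': "word n v'" "length v' + 1 = length (take t w)"
        "hat_eq n (take t w) (v' @ [x])" unfolding EX_prop_def by blast
      define rest where "rest = drop (Suc t) w"
      have wdec: "w = take t w @ [x] @ rest" unfolding rest_def x_def using id_take_nth_drop[OF tl] by simp
      have "hat_eq n (take t w @ ([x] @ rest)) ((v' @ [x]) @ ([x] @ rest))" by (rule eq_app[OF v'(3)])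
      then have e1: "hat_eq n w (v' @ [x, x] @ rest)" using wdec by simp
      have "hat_step n (v' @ [x, x] @ rest) (v' @ rest)" by (rule hat_step.square)
      then have e2: "hat_eq n w (v' @ rest)" using e1 eq_trans eq_step by blast
      have wr: "word n (v' @ rest)" using v'(1) wd unfolding word_def rest_def by (auto dest: in_set_dropD)
      have "length w \<le> length (v' @ rest)" using r e2 wr unfolding reduced_word_def by blast
      moreover have "length (v' @ rest) < length w" using v'(2) tl unfolding rest_def by simp
      ultimately show False by simp
    qed
    then show ?case using tk g good_snoc by simp
  qed
  from this[of "length w"] show ?thesis by simp
qed



lemma sg_order: assumes n: "2 \<le> n" and lt: "y1 < y2" and gt: "sg n x y2 < sg n x y1"
  shows "y2 = y1 + 1 \<and> int n dvd (y1 - int x)"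
proof -
  have r1: "sg n x y1 \<le> y1 + 1" "sg n x y2 \<ge> y2 - 1" using sg_range[of n x y1] sg_range[of n x y2] by auto
  have e: "y2 = y1 + 1"
  proof (rule ccontr)
    assume "y2 \<noteq> y1 + 1" then have "y2 \<ge> y1 + 2" using lt by simp
    then show False using r1 gt by simp
  qed
  moreover have "int n dvd (y1 - int x)"
  proof (rule ccontr)
    assume nd: "\<not> int n dvd (y1 - int x)"
    have "sg n x y1 \<le> y1" using nd by (simp add: sg_def)
    moreover have "sg n x (y1 + 1) \<ge> y1 + 1" using nd by (simp add: sg_def)
    ultimately show False using gt e by simp
  qed
  ultimately show ?thesis by simp
qed

lemma first_flip: "Q (0::nat) \<Longrightarrow> \<not> Q m \<Longrightarrow> \<exists>t<m. Q t \<and> \<not> Q (Suc t)"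
proof (induction m)
  case 0 then show ?case by simp
next
  case (Suc m) then show ?case by (cases "Q m") (auto intro: less_SucI)
qed

lemma P_take: "t < length w \<Longrightarrow> Pw n (take (Suc t) w) = sg n (w ! t) \<circ> Pw n (take t w)"
  by (simp add: take_Suc_conv_app_nth)

lemma cp_dvd: "int n dvd (cross_pos n x - int x)"
  by (simp add: cross_pos_def)

lemma cyl_shift: assumes "1 \<le> a" "a \<le> n" "int n dvd (A - int a)" "int n dvd m"
  shows "cyl_wire n (A + m) = a"
proof (rule cyl_char)
  show "int n dvd (A + m - int a)" using dvd_add[OF assms(3) assms(4)] by (simp add: algebra_simps)
qed (use assms in auto)

lemma P_D: "Pw n w b = b + Dv n w b" by (simp add: Dv_def)

lemma take_len_P: "Pw n (take (length w) w) = Pw n w" by simp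

lemma dir1: assumes n: "2 \<le> n" and wd: "word n w" and g: "is_glide n w"
  and L: "\<forall>t<length w. crossing_param n \<alpha> w t > 0"
  and a: "1 \<le> a" "a \<le> n" and b: "1 \<le> b" "b \<le> n" and ab: "\<alpha> a > \<alpha> b"
  shows "Dv n w (int a) \<le> Dv n w (int b)"
proof (rule ccontr)
  assume "\<not> Dv n w (int a) \<le> Dv n w (int b)"
  then have gt: "Dv n w (int b) < Dv n w (int a)" by simp
  obtain k where k: "Dv n w (int a) - Dv n w (int b) = int n * k"
    using D_cong[OF n wd g, of "int a" "int b"] by (auto elim: dvdE)
  have "0 < int n * k" using gt k by simp
  then have "k \<ge> 1" using n by (simp add: zero_less_mult_iff)
  then have "int n * k \<ge> int n" using n by simp
  then have big: "Dv n w (int a) \<ge> Dv n w (int b) + int n" using k by simp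
  have anb: "a \<noteq> b" using gt by auto
  define A where "A = int a"
  define B where "B = (if a < b then int b else int b + int n)"
  have AB: "A < B" "B < A + int n" unfolding A_def B_def using anb a b by auto
  have Bd: "int n dvd (B - int b)" unfolding B_def by simp
  have Ad: "int n dvd (A - int a)" unfolding A_def by simp
  have DB: "Dv n w B = Dv n w (int b)" using D_shift[OF Bd] .
  have fin: "Pw n w B < Pw n w A" using DB big AB unfolding P_D A_def by simp
  define Q where "Q t = (Pw n (take t w) A < Pw n (take t w) B)" for t
  have "Q 0" using AB unfolding Q_def by simp
  moreover have "\<not> Q (length w)" using fin unfolding Q_def by simp
  ultimately obtain t where t: "t < length w" "Q t" "\<not> Q (Suc t)" using first_flip[of Q] by blast
  define f where "f = Pw n (take t w)"
  define x where "x = w ! t"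
  have f1: "Pw n (take (Suc t) w) = sg n x \<circ> f" using P_take[OF t(1)] unfolding f_def x_def .
  have ne: "sg n x (f A) \<noteq> sg n x (f B)"
  proof
    assume "sg n x (f A) = sg n x (f B)"
    then have "f A = f B" using sg_inv[OF n] by metis
    then show False using P_inj[OF n] AB unfolding f_def by fastforce
  qed
  have "sg n x (f B) < sg n x (f A)" using t(3) ne f1 unfolding Q_def by auto
  then have fl: "f B = f A + 1 \<and> int n dvd (f A - int x)" using sg_order[OF n] t(2) unfolding Q_def f_def by blast
  define Wt where "Wt = wires_after n (take t w)"
  have WA: "Wt (f A) = A" "Wt (f A + 1) = B" using WP[OF n] fl unfolding Wt_def f_def by metis+
  define cp where "cp = cross_pos n x"
  have dc: "int n dvd (cp - f A)" using d_shift'[OF cp_dvd[of n x] fl[THEN conjunct2], of "cp - f A"]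
    unfolding cp_def by simp
  have W1: "Wt cp = A + (cp - f A)" using W_shift[OF dc] WA unfolding Wt_def by simp
  have dc1: "int n dvd ((cp + 1) - (f A + 1))" using dc by simp
  have W2: "Wt (cp + 1) = B + (cp - f A)" using W_shift[OF dc1] WA unfolding Wt_def by simp
  have up: "upper_wire n w t = b" unfolding upper_wire_def
    using W2 cyl_shift[OF b Bd dc] unfolding Wt_def cp_def x_def by simp
  have lo: "lower_wire n w t = a" unfolding lower_wire_def
    using W1 cyl_shift[OF a Ad dc] unfolding Wt_def cp_def x_def by simp
  have "crossing_param n \<alpha> w t = \<alpha> b - \<alpha> a" unfolding crossing_param_def up lo ..
  then show False using L t(1) ab by auto
qed



lemma good_at: "good n w \<Longrightarrow> t < length w \<Longrightarrow> asc n (wires_after n (take t w)) (w ! t)"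
  unfolding good_def by blast

lemma dir2: assumes n: "2 \<le> n" and wd: "word n w" and g: "is_glide n w" and gd: "good n w"
  and M: "\<forall>a\<in>{1..n}. \<forall>b\<in>{1..n}. \<alpha> a > \<alpha> b \<longrightarrow> Dv n w (int a) \<le> Dv n w (int b)"
  and inj: "\<forall>a\<in>{1..n}. \<forall>b\<in>{1..n}. a \<noteq> b \<longrightarrow> \<alpha> a \<noteq> \<alpha> b"
  and t: "t < length w"
  shows "crossing_param n \<alpha> w t > 0"
proof -
  define x where "x = w ! t"
  define cp where "cp = cross_pos n x"
  define Wt where "Wt = wires_after n (take t w)"
  define U where "U = Wt (cp + 1)"
  define L where "L = Wt cp"
  have hcp: "int n dvd (cp - int x)" unfolding cp_def by (rule cp_dvd)
  have LU: "L < U" using good_at[OF gd t] hcp unfolding asc_def L_def U_def Wt_def x_def by blast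
  have PU: "Pw n (take t w) U = cp + 1" "Pw n (take t w) L = cp"
    using PW[OF n] unfolding U_def L_def Wt_def by auto
  have stay: "s \<le> length w \<Longrightarrow> Suc t \<le> s \<Longrightarrow> Pw n (take s w) U < Pw n (take s w) L" for s
  proof (induction s rule: nat_induct)
    case 0 then show ?case by simp
  next
    case (Suc s)
    show ?case
    proof (cases "s = t")
      case True
      have "Pw n (take (Suc t) w) = sg n x \<circ> Pw n (take t w)" using P_take[OF t] x_def by simp
      then show ?thesis using True PU sgv[OF n hcp] by simp
    next
      case False
      then have sl: "s < length w" "Suc t \<le> s" using Suc.prems by auto
      have ih: "Pw n (take s w) U < Pw n (take s w) L" using Suc.IH sl by simp
      define f where "f = Pw n (take s w)"
      define y where "y = w ! s"
      have f1: "Pw n (take (Suc s) w) = sg n y \<circ> f" using P_take[OF sl(1)] unfolding f_def y_def .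
      show ?thesis
      proof (rule ccontr)
        assume "\<not> Pw n (take (Suc s) w) U < Pw n (take (Suc s) w) L"
        moreover have "sg n y (f U) \<noteq> sg n y (f L)"
        proof
          assume "sg n y (f U) = sg n y (f L)"
          then have "f U = f L" using sg_inv[OF n] by metis
          then show False using P_inj[OF n] LU unfolding f_def by fastforce
        qed
        ultimately have "sg n y (f L) < sg n y (f U)" using f1 by auto
        then have fl: "f L = f U + 1 \<and> int n dvd (f U - int y)" using sg_order[OF n] ih unfolding f_def by blast
        have "asc n (wires_after n (take s w)) y" using good_at[OF gd sl(1)] y_def by simp
        then have "wires_after n (take s w) (f U) < wires_after n (take s w) (f U + 1)"
          using fl unfolding asc_def by blast
        moreover have "wires_after n (take s w) (f U) = U" "wires_after n (take s w) (f U + 1) = L"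
          using WP[OF n] fl unfolding f_def by metis+
        ultimately show False using LU by simp
      qed
    qed
  qed
  have fin: "Pw n w U < Pw n w L" using stay[of "length w"] t by simp
  define l where "l = cyl_wire n L"
  define u where "u = cyl_wire n U"
  have lp: "1 \<le> l" "l \<le> n" "int n dvd (L - int l)" using cyl_props[of n L] n unfolding l_def by auto
  have up: "1 \<le> u" "u \<le> n" "int n dvd (U - int u)" using cyl_props[of n U] n unfolding u_def by auto
  have "Dv n w L = Dv n w (int l)" "Dv n w U = Dv n w (int u)" using D_shift lp(3) up(3) by auto
  then have Dlu: "Dv n w (int u) < Dv n w (int l)" using fin LU unfolding P_D by simp
  then have "\<not> \<alpha> l > \<alpha> u" using M lp up by fastforce
  moreover have "l \<noteq> u" using Dlu by auto
  ultimately have "\<alpha> u > \<alpha> l" using inj lp up by fastforce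
  moreover have "upper_wire n w t = u" "lower_wire n w t = l"
    unfolding upper_wire_def lower_wire_def u_def l_def U_def L_def Wt_def cp_def x_def by simp_all
  ultimately show ?thesis unfolding crossing_param_def by simp
qed



theorem proposition7p4:
  fixes n :: nat and \<alpha> :: "nat \<Rightarrow> real" and \<pi> :: "nat \<Rightarrow> nat" and w :: "nat list"
  assumes "n \<ge> 2"
    and "\<pi> permutes {1..n}"
    and "\<forall>i\<in>{1..<n}. \<alpha> (\<pi> i) > \<alpha> (\<pi> (Suc i))"
    and "reduced_word n w"
    and "is_glide n w"
  shows "(\<forall>t<length w. crossing_param n \<alpha> w t > 0) \<longleftrightarrow>
         (\<forall>i\<in>{1..<n}. traj n w (\<pi> i) \<ge> traj n w (\<pi> (Suc i)))"
proof -
  have n: "2 \<le> n" using assms(1) .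
  have wd: "word n w" using assms(4) by (simp add: reduced_word_def)
  have g: "is_glide n w" using assms(5) .
  have gd: "good n w" using reduced_good[OF n assms(4)] .
  have pin: "\<pi> x \<in> {1..n} \<longleftrightarrow> x \<in> {1..n}" for x using permutes_in_image[OF assms(2)] .
  have pisurj: "\<exists>x\<in>{1..n}. \<pi> x = a" if "a \<in> {1..n}" for a
  proof -
    have "\<pi> (inv \<pi> a) = a" using permutes_inverses(1)[OF assms(2)] .
    moreover have "inv \<pi> a \<in> {1..n}" using permutes_in_image[OF permutes_inv[OF assms(2)]] that by simp
    ultimately show ?thesis by blast
  qed
  have dec: "\<alpha> (\<pi> x) > \<alpha> (\<pi> y)" if "1 \<le> x" "x < y" "y \<le> n" for x y
    using that
  proof (induction y rule: nat_induct)
    case 0 then show ?case by simp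
  next
    case (Suc y)
    have s: "\<alpha> (\<pi> y) > \<alpha> (\<pi> (Suc y))" using assms(3) Suc.prems by simp
    show ?case
    proof (cases "x = y")
      case True then show ?thesis using s by simp
    next
      case False then show ?thesis using Suc s by simp
    qed
  qed
  have pinj: "\<pi> x = \<pi> y \<Longrightarrow> x = y" for x y using permutes_inj[OF assms(2)] by (auto dest: injD)
  have inj: "\<forall>a\<in>{1..n}. \<forall>b\<in>{1..n}. a \<noteq> b \<longrightarrow> \<alpha> a \<noteq> \<alpha> b"
  proof (intro ballI impI)
    fix a b assume a: "a \<in> {1..n}" and b: "b \<in> {1..n}" and ne: "a \<noteq> b"
    obtain xa where xa: "xa \<in> {1..n}" "\<pi> xa = a" using pisurj a by blast
    obtain xb where xb: "xb \<in> {1..n}" "\<pi> xb = b" using pisurj b by blast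
    have "xa \<noteq> xb" using ne xa xb by auto
    then have "xa < xb \<or> xb < xa" by auto
    then show "\<alpha> a \<noteq> \<alpha> b" using dec xa xb by fastforce
  qed
  have tr: "traj n w x \<ge> traj n w y \<longleftrightarrow> Dv n w (int x) \<le> Dv n w (int y)"
    if "x \<in> {1..n}" "y \<in> {1..n}" for x y
  proof -
    have ex: "int n * traj n w x = Dv n w 1 - Dv n w (int x)" using traj_formula[OF n wd g] that by simp
    have ey: "int n * traj n w y = Dv n w 1 - Dv n w (int y)" using traj_formula[OF n wd g] that by simp
    have "traj n w x \<ge> traj n w y \<longleftrightarrow> int n * traj n w x \<ge> int n * traj n w y"
      using n by (simp add: mult_le_cancel_left_pos)
    then show ?thesis using ex ey by simp
  qed
  have MR: "(\<forall>a\<in>{1..n}. \<forall>b\<in>{1..n}. \<alpha> a > \<alpha> b \<longrightarrow> Dv n w (int a) \<le> Dv n w (int b)) \<longleftrightarrow>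
         (\<forall>i\<in>{1..<n}. traj n w (\<pi> i) \<ge> traj n w (\<pi> (Suc i)))"
  proof
    assume M: "\<forall>a\<in>{1..n}. \<forall>b\<in>{1..n}. \<alpha> a > \<alpha> b \<longrightarrow> Dv n w (int a) \<le> Dv n w (int b)"
    show "\<forall>i\<in>{1..<n}. traj n w (\<pi> i) \<ge> traj n w (\<pi> (Suc i))"
    proof
      fix i assume i: "i \<in> {1..<n}"
      have p1: "\<pi> i \<in> {1..n}" "\<pi> (Suc i) \<in> {1..n}" using i pin by auto
      have "\<alpha> (\<pi> i) > \<alpha> (\<pi> (Suc i))" using assms(3) i by blast
      then have "Dv n w (int (\<pi> i)) \<le> Dv n w (int (\<pi> (Suc i)))" using M p1 by blast
      then show "traj n w (\<pi> i) \<ge> traj n w (\<pi> (Suc i))" using tr[OF p1] by simp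
    qed
  next
    assume R: "\<forall>i\<in>{1..<n}. traj n w (\<pi> i) \<ge> traj n w (\<pi> (Suc i))"
    have step: "Dv n w (int (\<pi> k)) \<le> Dv n w (int (\<pi> (Suc k)))" if "k \<in> {1..<n}" for k
    proof -
      have p1: "\<pi> k \<in> {1..n}" "\<pi> (Suc k) \<in> {1..n}" using that pin by auto
      then show ?thesis using R that tr[OF p1] by simp
    qed
    have chain: "Dv n w (int (\<pi> x)) \<le> Dv n w (int (\<pi> y))" if "1 \<le> x" "x \<le> y" "y \<le> n" for x y
      using that
    proof (induction y rule: nat_induct)
      case 0 then show ?case by simp
    next
      case (Suc y)
      show ?case
      proof (cases "x = Suc y")
        case True then show ?thesis by simp
      next
        case False
        then have "x \<le> y" "y \<le> n" using Suc.prems by auto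
        then have "Dv n w (int (\<pi> x)) \<le> Dv n w (int (\<pi> y))" using Suc.IH Suc.prems by simp
        moreover have "Dv n w (int (\<pi> y)) \<le> Dv n w (int (\<pi> (Suc y)))" using step Suc.prems \<open>x \<le> y\<close> by simp
        ultimately show ?thesis by simp
      qed
    qed
    show "\<forall>a\<in>{1..n}. \<forall>b\<in>{1..n}. \<alpha> a > \<alpha> b \<longrightarrow> Dv n w (int a) \<le> Dv n w (int b)"
    proof (intro ballI impI)
      fix a b assume a: "a \<in> {1..n}" and b: "b \<in> {1..n}" and ab: "\<alpha> a > \<alpha> b"
      obtain xa where xa: "xa \<in> {1..n}" "\<pi> xa = a" using pisurj a by blast
      obtain xb where xb: "xb \<in> {1..n}" "\<pi> xb = b" using pisurj b by blast
      have "\<not> xb < xa" using dec[of xb xa] xa xb ab by auto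
      moreover have "xa \<noteq> xb" using ab xa xb by auto
      ultimately have "xa \<le> xb" by simp
      then show "Dv n w (int a) \<le> Dv n w (int b)" using chain[of xa xb] xa xb by simp
    qed
  qed
  have LM: "(\<forall>t<length w. crossing_param n \<alpha> w t > 0) \<longleftrightarrow>
         (\<forall>a\<in>{1..n}. \<forall>b\<in>{1..n}. \<alpha> a > \<alpha> b \<longrightarrow> Dv n w (int a) \<le> Dv n w (int b))"
  proof
    assume "\<forall>t<length w. crossing_param n \<alpha> w t > 0"
    then show "\<forall>a\<in>{1..n}. \<forall>b\<in>{1..n}. \<alpha> a > \<alpha> b \<longrightarrow> Dv n w (int a) \<le> Dv n w (int b)"
      using dir1[OF n wd g] by auto
  next
    assume "\<forall>a\<in>{1..n}. \<forall>b\<in>{1..n}. \<alpha> a > \<alpha> b \<longrightarrow> Dv n w (int a) \<le> Dv n w (int b)"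
    then show "\<forall>t<length w. crossing_param n \<alpha> w t > 0"
      using dir2[OF n wd g gd _ inj] by blast
  qed
  show ?thesis using LM MR by simp
qed

end
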